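(* Let $H$ be an infinite dimensional real or complex Hilbert space and let $P,Q$ be projections on $H$ such that for every projection $R$ on $H$ with finite corank we have $RP=PR$ if and only if $RQ=QR$. Then either $P=Q$ or $P=I-Q$.
   Context: A projection means a self-adjoint idempotent bounded operator on $H$. A projection $R$ has finite corank if $I-R$ has finite rank. *)

theory Defs
  imports "HOL-Analysis.Analysis"
begin

text \<open>A real Hilbert space is a type of class real_inner and complete_space.
  Operators on H are functions of type 'a => 'a that are bounded (real-)linear.\<close>

definition is_projection :: "('a::real_inner \<Rightarrow> 'a) \<Rightarrow> bool" where
  "is_projection R \<longleftrightarrow> bounded_linear R \<and> R \<circ> R = R \<and>
     (\<forall>x y. inner (R x) y = inner x (R y))"

definition finite_rank :: "('a::real_vector \<Rightarrow> 'a) \<Rightarrow> bool" where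
  "finite_rank T \<longleftrightarrow> (\<exists>B. finite B \<and> range T \<subseteq> span B)"

definition finite_corank :: "('a::real_vector \<Rightarrow> 'a) \<Rightarrow> bool" where
  "finite_corank R \<longleftrightarrow> finite_rank (\<lambda>x. x - R x)"

definition infinite_dimensional :: "'a::real_vector itself \<Rightarrow> bool" where
  "infinite_dimensional _ \<longleftrightarrow> \<not> (\<exists>B::'a set. finite B \<and> UNIV \<subseteq> span B)"

text \<open>Complex Hilbert spaces: a complex Hilbert space is its underlying real
  Hilbert space together with multiplication by i, an orthogonal real-linear map J
  with J (J x) = - x. Complex scalar multiplication and the complex inner product
  (linear in the first, conjugate-linear in the second argument) are recovered
  from J as follows.\<close>

definition complex_structure :: "('a::real_inner \<Rightarrow> 'a) \<Rightarrow> bool" where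
  "complex_structure J \<longleftrightarrow> bounded_linear J \<and> (\<forall>x. J (J x) = - x) \<and>
     (\<forall>x y. inner (J x) (J y) = inner x y)"

definition cscale :: "('a::real_vector \<Rightarrow> 'a) \<Rightarrow> complex \<Rightarrow> 'a \<Rightarrow> 'a" where
  "cscale J c x = Re c *\<^sub>R x + Im c *\<^sub>R J x"

definition cinner :: "('a::real_inner \<Rightarrow> 'a) \<Rightarrow> 'a \<Rightarrow> 'a \<Rightarrow> complex" where
  "cinner J x y = Complex (inner x y) (inner x (J y))"

definition cspan :: "('a::real_vector \<Rightarrow> 'a) \<Rightarrow> 'a set \<Rightarrow> 'a set" where
  "cspan J B = {\<Sum>b\<in>S. cscale J (c b) b | S c. finite S \<and> S \<subseteq> B}"

definition is_cprojection :: "('a::real_inner \<Rightarrow> 'a) \<Rightarrow> ('a \<Rightarrow> 'a) \<Rightarrow> bool" where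
  "is_cprojection J R \<longleftrightarrow> bounded_linear R \<and>
     (\<forall>c x. R (cscale J c x) = cscale J c (R x)) \<and> R \<circ> R = R \<and>
     (\<forall>x y. cinner J (R x) y = cinner J x (R y))"

definition cfinite_rank :: "('a::real_vector \<Rightarrow> 'a) \<Rightarrow> ('a \<Rightarrow> 'a) \<Rightarrow> bool" where
  "cfinite_rank J T \<longleftrightarrow> (\<exists>B. finite B \<and> range T \<subseteq> cspan J B)"

definition cfinite_corank :: "('a::real_vector \<Rightarrow> 'a) \<Rightarrow> ('a \<Rightarrow> 'a) \<Rightarrow> bool" where
  "cfinite_corank J R \<longleftrightarrow> cfinite_rank J (\<lambda>x. x - R x)"

definition cinfinite_dimensional :: "('a::real_vector \<Rightarrow> 'a) \<Rightarrow> bool" where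
  "cinfinite_dimensional J \<longleftrightarrow> \<not> (\<exists>B. finite B \<and> UNIV \<subseteq> cspan J B)"

end

theory Submission
  imports Defs
begin
lemma union_sub:
  fixes U V W :: "'a::real_vector set"
  assumes U: "\<And>a b. a \<in> U \<Longrightarrow> b \<in> U \<Longrightarrow> a + b \<in> U"
    and V: "\<And>a b. a \<in> V \<Longrightarrow> b \<in> V \<Longrightarrow> a - b \<in> V"
    and W: "\<And>a b. a \<in> W \<Longrightarrow> b \<in> W \<Longrightarrow> a - b \<in> W"
    and sub: "U \<subseteq> V \<union> W"
  shows "U \<subseteq> V \<or> U \<subseteq> W"
proof (rule ccontr)
  assume "\<not> ?thesis"
  then obtain u1 u2 where u: "u1 \<in> U" "u1 \<notin> V" "u2 \<in> U" "u2 \<notin> W" by blast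
  with sub have "u1 \<in> W" "u2 \<in> V" by blast+
  have "u1 + u2 \<in> V \<union> W" using U u sub by blast
  moreover have "u1 + u2 \<notin> V" proof
    assume "u1 + u2 \<in> V"
    then have "u1 + u2 - u2 \<in> V" using V \<open>u2 \<in> V\<close> by blast
    then show False using u by simp
  qed
  moreover have "u1 + u2 \<notin> W" proof
    assume "u1 + u2 \<in> W"
    then have "u1 + u2 - u1 \<in> W" using W \<open>u1 \<in> W\<close> by blast
    then show False using u by simp
  qed
  ultimately show False by blast
qed

lemma abstract:
  fixes P Q :: "'a::real_vector \<Rightarrow> 'a"
  assumes lP: "linear P" and lQ: "linear Q" and iP: "\<And>x. P (P x) = P x" and iQ: "\<And>x. Q (Q x) = Q x"
    and H: "\<And>x. (P x = x \<or> P x = 0) \<longleftrightarrow> (Q x = x \<or> Q x = 0)"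
  shows "P = Q \<or> P = (\<lambda>x. x - Q x)"
proof -
  define RP where "RP = {x. P x = x}"
  define KP where "KP = {x. P x = 0}"
  define RQ where "RQ = {x. Q x = x}"
  define KQ where "KQ = {x. Q x = 0}"
  have cl: "a + b \<in> S" "a - b \<in> S" if "a \<in> S" "b \<in> S" "S \<in> {RP,KP,RQ,KQ}" for a b S
    using that lP lQ unfolding RP_def KP_def RQ_def KQ_def
    by (auto simp: linear_add linear_diff)
  have eq: "RP \<union> KP = RQ \<union> KQ" using H unfolding RP_def KP_def RQ_def KQ_def by auto
  have dec: "P y \<in> RP" "y - P y \<in> KP" for y
    unfolding RP_def KP_def using iP lP by (auto simp: linear_diff)
  have decQ: "Q y \<in> RQ" "y - Q y \<in> KQ" for y
    unfolding RQ_def KQ_def using iQ lQ by (auto simp: linear_diff)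
  have s1: "RP \<subseteq> RQ \<or> RP \<subseteq> KQ"
    by (rule union_sub) (use cl eq in auto)
  have s2: "KP \<subseteq> RQ \<or> KP \<subseteq> KQ"
    by (rule union_sub) (use cl eq in auto)
  have split: "y = P y + (y - P y)" for y by simp
  have splitQ: "y = Q y + (y - Q y)" for y by simp
  have QP: "Q y = Q (P y) + Q (y - P y)" for y using lQ by (metis linear_add split)
  have PQ: "P y = P (Q y) + P (y - Q y)" for y using lP by (metis linear_add splitQ)
  have allP: "P = Q \<or> P = (\<lambda>x. x - Q x)" if "UNIV \<subseteq> RQ \<or> UNIV \<subseteq> KQ"
  proof -
    have "UNIV \<subseteq> RP \<union> KP" using that eq by auto
    then have "UNIV \<subseteq> RP \<or> UNIV \<subseteq> KP"
      by (intro union_sub) (use cl in auto)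
    then show ?thesis using that unfolding RP_def KP_def RQ_def KQ_def by (auto simp: fun_eq_iff subset_eq)
  qed
  show ?thesis
  proof -
    { assume a: "RP \<subseteq> RQ" "KP \<subseteq> KQ"
      have "Q y = P y" for y using QP[of y] dec[of y] a unfolding RP_def KP_def RQ_def KQ_def by (simp add: subset_eq)
      hence ?thesis by auto }
    moreover
    { assume a: "RP \<subseteq> KQ" "KP \<subseteq> RQ"
      have "Q y = y - P y" for y using QP[of y] dec[of y] a unfolding RP_def KP_def RQ_def KQ_def by (simp add: subset_eq)
      hence ?thesis by (auto simp: fun_eq_iff algebra_simps) }
    moreover
    { assume a: "RP \<subseteq> RQ" "KP \<subseteq> RQ"
      have "Q y = y" for y using QP[of y] dec[of y] a unfolding RP_def KP_def RQ_def KQ_def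
        by (simp add: subset_eq)
      hence ?thesis using allP unfolding RQ_def by auto }
    moreover
    { assume a: "RP \<subseteq> KQ" "KP \<subseteq> KQ"
      have "Q y = 0" for y using QP[of y] dec[of y] a unfolding RP_def KP_def RQ_def KQ_def by (simp add: subset_eq)
      hence ?thesis using allP unfolding KQ_def by auto }
    ultimately show ?thesis using s1 s2 by blast
  qed
qed
lemma proj_basic:
  assumes "is_projection P"
  shows "linear P" "\<And>y. P (P y) = P y" "\<And>y z. inner (P y) z = inner y (P z)"
  using assms unfolding is_projection_def
  by (auto simp: bounded_linear.linear fun_eq_iff dest: fun_cong)

lemma comm_iff:
  assumes "linear P" "linear F"
  shows "((\<lambda>y. y - F y) \<circ> P = P \<circ> (\<lambda>y. y - F y)) \<longleftrightarrow> (\<forall>y. F (P y) = P (F y))"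
  using assms by (auto simp: fun_eq_iff linear_diff)

lemma eig:
  fixes x :: "'a::real_inner"
  assumes "x \<noteq> 0" "linear P" "\<And>y. P (P y) = P y" "P x = a *\<^sub>R x"
  shows "P x = x \<or> P x = 0"
proof -
  have 1: "P (P x) = (a * a) *\<^sub>R x" using assms by (simp add: linear_scale)
  have "(a * a) *\<^sub>R x = a *\<^sub>R x" using 1 assms(3)[of x] assms(4) by metis
  then have "a * a = a" using assms(1) by (metis scaleR_cancel_right)
  then have "a = 0 \<or> a = 1" by (metis mult_cancel_right2 mult_zero_left)
  then show ?thesis using assms by auto
qed

lemma real_test:
  fixes x :: "'a::real_inner"
  assumes x: "x \<noteq> 0" and P: "is_projection P"
  defines "F \<equiv> \<lambda>y. (inner y x / inner x x) *\<^sub>R x"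
  shows "is_projection (\<lambda>y. y - F y)" "finite_corank (\<lambda>y. y - F y)"
    "((\<lambda>y. y - F y) \<circ> P = P \<circ> (\<lambda>y. y - F y)) \<longleftrightarrow> (P x = x \<or> P x = 0)"
proof -
  have n: "inner x x \<noteq> 0" using x by simp
  have blF: "bounded_linear F" unfolding F_def
  proof -
    have "bounded_linear (\<lambda>y. inner y x / inner x x)"
      using bounded_linear_compose[OF bounded_linear_divide bounded_linear_inner_left] unfolding o_def .
    then show "bounded_linear (\<lambda>y. (inner y x / inner x x) *\<^sub>R x)"
      by (rule bounded_linear_compose[OF bounded_linear_scaleR_left, unfolded o_def])
  qed
  have FF: "F (F y) = F y" for y using n unfolding F_def by (simp add: inner_commute)
  have Fs: "inner (F y) z = inner y (F z)" for y z unfolding F_def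
    by (simp add: inner_commute)
  show "is_projection (\<lambda>y. y - F y)" unfolding is_projection_def
  proof (intro conjI allI)
    show "bounded_linear (\<lambda>y. y - F y)" by (intro bounded_linear_sub bounded_linear_ident blF)
    show "(\<lambda>y. y - F y) \<circ> (\<lambda>y. y - F y) = (\<lambda>y. y - F y)"
      using FF blF by (auto simp: fun_eq_iff bounded_linear.linear linear_diff)
    show "inner (y - F y) z = inner y (z - F z)" for y z using Fs by (simp add: inner_diff)
  qed
  show "finite_corank (\<lambda>y. y - F y)" unfolding finite_corank_def finite_rank_def
    by (rule exI[of _ "{x}"]) (auto simp: F_def span_base span_scale)
  have lP: "linear P" and iP: "\<And>y. P (P y) = P y" and sP: "\<And>y z. inner (P y) z = inner y (P z)"
    using proj_basic[OF P] by auto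
  have lF: "linear F" using blF bounded_linear.linear by blast
  show "((\<lambda>y. y - F y) \<circ> P = P \<circ> (\<lambda>y. y - F y)) \<longleftrightarrow> (P x = x \<or> P x = 0)"
    unfolding comm_iff[OF lP lF]
  proof
    assume c: "\<forall>y. F (P y) = P (F y)"
    have "F x = x" using n unfolding F_def by simp
    then have "P x = (inner (P x) x / inner x x) *\<^sub>R x" using c unfolding F_def by metis
    then show "P x = x \<or> P x = 0" by (rule eig[OF x lP iP])
  next
    assume "P x = x \<or> P x = 0"
    then show "\<forall>y. F (P y) = P (F y)"
    proof
      assume a: "P x = x"
      show ?thesis unfolding F_def using a sP lP by (simp add: linear_scale)
    next
      assume a: "P x = 0"
      show ?thesis unfolding F_def using a sP lP by (simp add: linear_scale)
    qed
  qed
qed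
lemma cs_basic:
  assumes "complex_structure J"
  shows "linear J" "\<And>y. J (J y) = - y" "\<And>y z. inner (J y) (J z) = inner y z"
    "\<And>y z. inner (J y) z = - inner y (J z)" "\<And>y. inner y (J y) = 0"
proof -
  show lJ: "linear J" and JJ: "\<And>y. J (J y) = - y" and JI: "\<And>y z. inner (J y) (J z) = inner y z"
    using assms unfolding complex_structure_def by (auto simp: bounded_linear.linear)
  show A: "inner (J y) z = - inner y (J z)" for y z
  proof -
    have "inner (J y) z = inner (J (J y)) (J z)" using JI by simp
    also have "\<dots> = - inner y (J z)" using JJ by simp
    finally show ?thesis .
  qed
  show "inner y (J y) = 0" for y
    using A[of y y] by (simp add: inner_commute)
qed

lemma cproj_basic:
  assumes "is_cprojection J P"
  shows "linear P" "\<And>y. P (P y) = P y" "\<And>y z. inner (P y) z = inner y (P z)"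
    "\<And>y. P (J y) = J (P y)"
proof -
  show "linear P" "\<And>y. P (P y) = P y"
    using assms unfolding is_cprojection_def
    by (auto simp: bounded_linear.linear fun_eq_iff dest: fun_cong)
  show "inner (P y) z = inner y (P z)" for y z
    using assms unfolding is_cprojection_def cinner_def by (metis complex.inject)
  show "P (J y) = J (P y)" for y
  proof -
    have "cscale J \<i> y = J y" for y by (simp add: cscale_def)
    then show ?thesis using assms unfolding is_cprojection_def by metis
  qed
qed

lemma complex_test:
  fixes x :: "'a::real_inner"
  assumes x: "x \<noteq> 0" and J: "complex_structure J" and P: "is_cprojection J P"
  defines "F \<equiv> \<lambda>y. (inner y x / inner x x) *\<^sub>R x + (inner y (J x) / inner x x) *\<^sub>R J x"
  shows "is_cprojection J (\<lambda>y. y - F y)" "cfinite_corank J (\<lambda>y. y - F y)"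
    "((\<lambda>y. y - F y) \<circ> P = P \<circ> (\<lambda>y. y - F y)) \<longleftrightarrow> (P x = x \<or> P x = 0)"
proof -
  have n: "inner x x \<noteq> 0" using x by simp
  note Jb = cs_basic[OF J]
  have blJ: "bounded_linear J" using J unfolding complex_structure_def by blast
  have bl1: "bounded_linear (\<lambda>y. (inner y v / inner x x) *\<^sub>R w)" for v w
  proof -
    have "bounded_linear (\<lambda>y. inner y v / inner x x)"
      using bounded_linear_compose[OF bounded_linear_divide bounded_linear_inner_left] unfolding o_def .
    then show ?thesis
      by (rule bounded_linear_compose[OF bounded_linear_scaleR_left, unfolded o_def])
  qed
  have blF: "bounded_linear F" unfolding F_def by (intro bounded_linear_add bl1)
  have lF: "linear F" using blF bounded_linear.linear by blast
  have Fx: "F x = x" using n Jb(5)[of x] unfolding F_def by simp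
  have FJx: "F (J x) = J x" using n Jb(5)[of x] Jb(3)[of x x] unfolding F_def by (simp add: inner_commute)
  have FF: "F (F y) = F y" for y
  proof -
    have e: "F y = (inner y x / inner x x) *\<^sub>R x + (inner y (J x) / inner x x) *\<^sub>R J x"
      unfolding F_def by simp
    have "F (F y) = (inner y x / inner x x) *\<^sub>R F x + (inner y (J x) / inner x x) *\<^sub>R F (J x)"
      unfolding e using lF by (simp only: linear_add linear_scale)
    then show ?thesis using Fx FJx e by simp
  qed
  have Fs: "inner (F y) z = inner y (F z)" for y z unfolding F_def
    by (simp add: inner_commute inner_add_left inner_add_right mult.commute)
  have FJ: "F (J y) = J (F y)" for y
  proof -
    have "J (F y) = (inner y x / inner x x) *\<^sub>R J x + (inner y (J x) / inner x x) *\<^sub>R J (J x)"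
      unfolding F_def using Jb(1) by (simp only: linear_add linear_scale)
    also have "\<dots> = F (J y)" unfolding F_def using Jb(2)[of x] Jb(3)[of y x] Jb(4)[of y x]
      by (simp add: algebra_simps)
    finally show ?thesis by simp
  qed
  define R where "R = (\<lambda>y. y - F y)"
  have lR: "linear R" unfolding R_def using lF by (simp add: linear_compose_sub linear_id[unfolded id_def])
  have RJ: "R (J y) = J (R y)" for y unfolding R_def using FJ Jb by (simp add: linear_diff)
  have Rs: "inner (R y) z = inner y (R z)" for y z unfolding R_def using Fs by (simp add: inner_diff)
  show "is_cprojection J (\<lambda>y. y - F y)" unfolding R_def[symmetric] is_cprojection_def
  proof (intro conjI allI)
    show "bounded_linear R" unfolding R_def by (intro bounded_linear_sub bounded_linear_ident blF)
    show "R (cscale J c y) = cscale J c (R y)" for c y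
      unfolding cscale_def using lR RJ by (simp add: linear_add linear_scale)
    show "R \<circ> R = R"
      using FF lF unfolding R_def by (auto simp: fun_eq_iff linear_diff)
    show "cinner J (R y) z = cinner J y (R z)" for y z
      unfolding cinner_def using Rs RJ by simp
  qed
  show "cfinite_corank J (\<lambda>y. y - F y)" unfolding cfinite_corank_def cfinite_rank_def
  proof (rule exI[of _ "{x}"], safe)
    fix y
    show "y - (y - F y) \<in> cspan J {x}" unfolding cspan_def
      by (rule CollectI, rule exI[of _ "{x}"],
          rule exI[of _ "\<lambda>_. Complex (inner y x / inner x x) (inner y (J x) / inner x x)"])
        (simp add: cscale_def F_def)
  qed
  have lP: "linear P" and iP: "\<And>y. P (P y) = P y" and sP: "\<And>y z. inner (P y) z = inner y (P z)"
    and PJ: "\<And>y. P (J y) = J (P y)"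
    using cproj_basic[OF P] by auto
  show "((\<lambda>y. y - F y) \<circ> P = P \<circ> (\<lambda>y. y - F y)) \<longleftrightarrow> (P x = x \<or> P x = 0)"
    unfolding comm_iff[OF lP lF]
  proof
    assume c: "\<forall>y. F (P y) = P (F y)"
    have b: "inner (P x) (J x) = 0"
    proof -
      have "inner (P x) (J x) = inner x (J (P x))" using sP PJ by metis
      also have "\<dots> = - inner (J x) (P x)" using Jb(4)[of x "P x"] by simp
      finally show ?thesis by (simp add: inner_commute)
    qed
    have "P x = F (P x)" using c Fx by metis
    then have "P x = (inner (P x) x / inner x x) *\<^sub>R x" using b unfolding F_def by simp
    then show "P x = x \<or> P x = 0" by (rule eig[OF x lP iP])
  next
    assume "P x = x \<or> P x = 0"
    then show "\<forall>y. F (P y) = P (F y)"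
    proof
      assume a: "P x = x"
      show ?thesis unfolding F_def using a sP lP PJ by (simp add: linear_scale linear_add)
    next
      assume a: "P x = 0"
      show ?thesis unfolding F_def using a sP lP PJ Jb(1) by (simp add: linear_scale linear_add linear_0)
    qed
  qed
qed
theorem lemma5:
  fixes P Q :: "'a::{real_inner, complete_space} \<Rightarrow> 'a"
  shows
   "(infinite_dimensional TYPE('a) \<and> is_projection P \<and> is_projection Q \<and>
      (\<forall>R. is_projection R \<and> finite_corank R \<longrightarrow> (R \<circ> P = P \<circ> R \<longleftrightarrow> R \<circ> Q = Q \<circ> R))
     \<longrightarrow> P = Q \<or> P = (\<lambda>x. x - Q x))
    \<and>
    (\<forall>J. complex_structure J \<and> cinfinite_dimensional J \<and>
       is_cprojection J P \<and> is_cprojection J Q \<and>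
       (\<forall>R. is_cprojection J R \<and> cfinite_corank J R \<longrightarrow> (R \<circ> P = P \<circ> R \<longleftrightarrow> R \<circ> Q = Q \<circ> R))
     \<longrightarrow> P = Q \<or> P = (\<lambda>x. x - Q x))"
proof (intro conjI impI allI)
  assume A: "infinite_dimensional TYPE('a) \<and> is_projection P \<and> is_projection Q \<and>
      (\<forall>R. is_projection R \<and> finite_corank R \<longrightarrow> (R \<circ> P = P \<circ> R \<longleftrightarrow> R \<circ> Q = Q \<circ> R))"
  then have P: "is_projection P" and Q: "is_projection Q"
    and H: "\<And>R. is_projection R \<Longrightarrow> finite_corank R \<Longrightarrow> (R \<circ> P = P \<circ> R \<longleftrightarrow> R \<circ> Q = Q \<circ> R)"
    by auto
  note bP = proj_basic[OF P] and bQ = proj_basic[OF Q]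
  show "P = Q \<or> P = (\<lambda>x. x - Q x)"
  proof (rule abstract[OF bP(1) bQ(1) bP(2) bQ(2)])
    fix x
    show "(P x = x \<or> P x = 0) \<longleftrightarrow> (Q x = x \<or> Q x = 0)"
    proof (cases "x = 0")
      case True then show ?thesis using bP(1) bQ(1) by (simp add: linear_0)
    next
      case False
      show ?thesis
        using real_test[OF False P] real_test(3)[OF False Q] H by blast
    qed
  qed
next
  fix J
  assume A: "complex_structure J \<and> cinfinite_dimensional J \<and>
       is_cprojection J P \<and> is_cprojection J Q \<and>
       (\<forall>R. is_cprojection J R \<and> cfinite_corank J R \<longrightarrow> (R \<circ> P = P \<circ> R \<longleftrightarrow> R \<circ> Q = Q \<circ> R))"
  then have J: "complex_structure J" and P: "is_cprojection J P" and Q: "is_cprojection J Q"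
    and H: "\<And>R. is_cprojection J R \<Longrightarrow> cfinite_corank J R \<Longrightarrow> (R \<circ> P = P \<circ> R \<longleftrightarrow> R \<circ> Q = Q \<circ> R)"
    by auto
  note bP = cproj_basic[OF P] and bQ = cproj_basic[OF Q]
  show "P = Q \<or> P = (\<lambda>x. x - Q x)"
  proof (rule abstract[OF bP(1) bQ(1) bP(2) bQ(2)])
    fix x
    show "(P x = x \<or> P x = 0) \<longleftrightarrow> (Q x = x \<or> Q x = 0)"
    proof (cases "x = 0")
      case True then show ?thesis using bP(1) bQ(1) by (simp add: linear_0)
    next
      case False
      show ?thesis
        using complex_test[OF False J P] complex_test(3)[OF False J Q] H by blast
    qed
  qed
qed

end
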